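(* Let $A \in \mathbb{R}^{m \times n}$ have full column rank and let $p \in [1,\infty]$. Then there exists an invertible matrix $R \in \mathbb{R}^{n \times n}$ such that $\bar\kappa_p(A R^{-1}) \le n$.
   Context: For $p\in[1,\infty]$ let $q$ be the dual exponent ($1/p+1/q=1$), so $\|\cdot\|_q$ is the dual norm of $\|\cdot\|_p$. For a matrix $M \in \mathbb{R}^{m \times n}$, write $|M|_p = (\sum_{i,j}|M_{ij}|^p)^{1/p}$ for the entrywise $\ell_p$ norm (the maximum absolute entry if $p=\infty$). $M$ is called $(\alpha,\beta,p)$-conditioned if (1) $|M|_p \le \alpha$ and (2) $\|z\|_q \le \beta \|Mz\|_p$ for all $z\in\mathbb{R}^n$. The $(\alpha,\beta,p)$-condition number $\bar\kappa_p(M)$ is the minimum (infimum) of $\alpha\beta$ over all $(\alpha,\beta)$ for which $M$ is $(\alpha,\beta,p)$-conditioned. *)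

theory Defs
  imports "HOL-Analysis.Analysis"
begin

text \<open>Exponents p are elements of [1,\<infinity>], represented as extended reals with p \<ge> 1.\<close>

definition dual_exp :: "ereal \<Rightarrow> ereal" where
  "dual_exp p = (if p = \<infinity> then 1 else if p = 1 then \<infinity>
                 else ereal (real_of_ereal p / (real_of_ereal p - 1)))"

definition lp_norm :: "ereal \<Rightarrow> 'a set \<Rightarrow> ('a \<Rightarrow> real) \<Rightarrow> real" where
  "lp_norm p I f = (if p = \<infinity> then Max ((\<lambda>i. \<bar>f i\<bar>) ` I)
     else (\<Sum>i\<in>I. \<bar>f i\<bar> powr real_of_ereal p) powr (1 / real_of_ereal p))"

definition vec_pnorm :: "ereal \<Rightarrow> real^'n \<Rightarrow> real" where
  "vec_pnorm p x = lp_norm p UNIV (\<lambda>i. x $ i)"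

definition entry_pnorm :: "ereal \<Rightarrow> real^'n^'m \<Rightarrow> real" where
  "entry_pnorm p M = lp_norm p UNIV (\<lambda>(i, j). M $ i $ j)"

definition conditioned :: "real \<Rightarrow> real \<Rightarrow> ereal \<Rightarrow> real^'n^'m \<Rightarrow> bool" where
  "conditioned \<alpha> \<beta> p M \<longleftrightarrow> entry_pnorm p M \<le> \<alpha> \<and>
     (\<forall>z::real^'n. vec_pnorm (dual_exp p) z \<le> \<beta> * vec_pnorm p (M *v z))"

definition cond_number :: "ereal \<Rightarrow> real^'n^'m \<Rightarrow> real" where
  "cond_number p M = Inf {\<alpha> * \<beta> | \<alpha> \<beta>. conditioned \<alpha> \<beta> p M}"

end

theory Submission imports Defs begin

lemma ereal_ge1_cases:
  assumes "1 \<le> (p::ereal)"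
  obtains "p = \<infinity>" | r where "p = ereal r" "r \<ge> 1" "real_of_ereal p = r"
  using assms by (cases p) auto

lemma lp_comp:
  assumes "finite I" "i \<in> I" "1 \<le> p"
  shows "\<bar>f i\<bar> \<le> lp_norm p I f"
  using assms(3)
proof (cases rule: ereal_ge1_cases)
  case 1
  then show ?thesis using assms by (simp add: lp_norm_def)
next
  case (2 r)
  have "\<bar>f i\<bar> = (\<bar>f i\<bar> powr r) powr (1/r)"
    using 2 by (simp add: powr_powr)
  also have "\<dots> \<le> (\<Sum>i\<in>I. \<bar>f i\<bar> powr r) powr (1/r)"
    by (rule powr_mono2) (use 2 assms in \<open>auto intro: member_le_sum[where f="\<lambda>i. \<bar>f i\<bar> powr r"]\<close>)
  finally show ?thesis using 2 by (simp add: lp_norm_def)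
qed

lemma lp_hom:
  assumes "finite I" "I \<noteq> {}" "1 \<le> p" "t > 0"
  shows "lp_norm p I (\<lambda>i. t * f i) \<le> t * lp_norm p I f"
  using assms(3)
proof (cases rule: ereal_ge1_cases)
  case 1
  have "Max ((\<lambda>i. \<bar>t * f i\<bar>) ` I) \<le> t * Max ((\<lambda>i. \<bar>f i\<bar>) ` I)"
  proof (subst Max_le_iff)
    show "\<forall>a\<in>(\<lambda>i. \<bar>t * f i\<bar>) ` I. a \<le> t * Max ((\<lambda>i. \<bar>f i\<bar>) ` I)"
      using assms by (auto simp: abs_mult intro!: mult_left_mono)
  qed (use assms in auto)
  then show ?thesis using 1 by (simp add: lp_norm_def)
next
  case (2 r)
  have "(\<Sum>i\<in>I. \<bar>t * f i\<bar> powr r) = t powr r * (\<Sum>i\<in>I. \<bar>f i\<bar> powr r)"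
    using assms by (simp add: abs_mult powr_mult sum_distrib_left)
  then have "(\<Sum>i\<in>I. \<bar>t * f i\<bar> powr r) powr (1/r) = (t powr r) powr (1/r) * (\<Sum>i\<in>I. \<bar>f i\<bar> powr r) powr (1/r)"
    by (simp add: powr_mult sum_nonneg)
  also have "(t powr r) powr (1/r) = t" using 2 assms by (simp add: powr_powr)
  finally show ?thesis using 2 by (simp add: lp_norm_def)
qed

lemma lp_bound:
  assumes "finite I" "I \<noteq> {}" "1 \<le> p" "\<And>i. i \<in> I \<Longrightarrow> \<bar>f i\<bar> \<le> s" "s \<ge> 0"
  shows "lp_norm p I f \<le> (if p = \<infinity> then 1 else real (card I) powr (1 / real_of_ereal p)) * s"
  using assms(3)
proof (cases rule: ereal_ge1_cases)
  case 1
  then show ?thesis using assms by (auto simp: lp_norm_def)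
next
  case (2 r)
  have "(\<Sum>i\<in>I. \<bar>f i\<bar> powr r) \<le> (\<Sum>i\<in>I. s powr r)"
    using assms 2 by (intro sum_mono powr_mono2) auto
  then have "(\<Sum>i\<in>I. \<bar>f i\<bar> powr r) powr (1/r) \<le> (real (card I) * s powr r) powr (1/r)"
    using 2 by (intro powr_mono2) (auto intro: sum_nonneg)
  also have "\<dots> = real (card I) powr (1/r) * s"
    using 2 assms by (simp add: powr_mult powr_powr)
  finally show ?thesis using 2 by (simp add: lp_norm_def)
qed

lemma lp_le1:
  assumes "p = ereal r" "r \<ge> 1"
  shows "lp_norm p I f \<le> 1 \<longleftrightarrow> (\<Sum>i\<in>I. \<bar>f i\<bar> powr r) \<le> 1"
proof -
  let ?S = "(\<Sum>i\<in>I. \<bar>f i\<bar> powr r)"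
  have S0: "?S \<ge> 0" by (simp add: sum_nonneg)
  have e: "lp_norm p I f = ?S powr (1/r)" using assms by (simp add: lp_norm_def)
  show ?thesis
  proof
    assume "?S \<le> 1"
    then have "?S powr (1/r) \<le> 1 powr (1/r)" using assms S0 by (intro powr_mono2) auto
    then show "lp_norm p I f \<le> 1" using e by simp
  next
    assume a: "lp_norm p I f \<le> 1"
    show "?S \<le> 1"
    proof (rule ccontr)
      assume "\<not> ?S \<le> 1"
      then have "1 powr (1/r) < ?S powr (1/r)" using assms by (intro powr_less_mono2) auto
      then show False using a e by simp
    qed
  qed
qed

lemma lp_closed:
  assumes "1 \<le> p"
  shows "closed {v::real^'m. vec_pnorm p v \<le> 1}"
  using assms
proof (cases rule: ereal_ge1_cases)
  case 1
  have "{v::real^'m. vec_pnorm p v \<le> 1} = (\<Inter>i. {v. \<bar>v$i\<bar> \<le> 1})"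
    using 1 by (auto simp: vec_pnorm_def lp_norm_def)
  moreover have "closed {v::real^'m. \<bar>v$i\<bar> \<le> 1}" for i
    by (intro closed_Collect_le continuous_intros)
  ultimately show ?thesis by auto
next
  case (2 r)
  have "{v::real^'m. vec_pnorm p v \<le> 1} = {v. (\<Sum>i\<in>UNIV. \<bar>v$i\<bar> powr r) \<le> 1}"
  proof (intro Collect_cong iffI)
    fix v :: "real^'m"
    let ?S = "(\<Sum>i\<in>UNIV. \<bar>v$i\<bar> powr r)"
    have S0: "?S \<ge> 0" by (simp add: sum_nonneg)
    {
      assume "?S \<le> 1"
      then have "?S powr (1/r) \<le> 1 powr (1/r)" using 2 S0 by (intro powr_mono2) auto
      then show "vec_pnorm p v \<le> 1" using 2 by (simp add: vec_pnorm_def lp_norm_def)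
    }
    {
      assume a: "vec_pnorm p v \<le> 1"
      show "?S \<le> 1"
      proof (rule ccontr)
        assume "\<not> ?S \<le> 1"
        then have "1 powr (1/r) < ?S powr (1/r)" using 2 by (intro powr_less_mono2) auto
        then show False using a 2 by (simp add: vec_pnorm_def lp_norm_def)
      qed
    }
  qed
  moreover have "closed {v::real^'m. (\<Sum>i\<in>UNIV. \<bar>v$i\<bar> powr r) \<le> 1}"
    by (intro closed_Collect_le continuous_intros continuous_on_powr') (use 2 in auto)
  ultimately show ?thesis by simp
qed

lemma auerbach:
  fixes A :: "real^'n^'m" and N :: "real^'m \<Rightarrow> real"
  assumes hom: "\<And>v t. t > 0 \<Longrightarrow> N (t *\<^sub>R v) \<le> t * N v"
    and comp: "\<And>v i. \<bar>v $ i\<bar> \<le> N v"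
    and cl: "closed {v. N v \<le> 1}"
    and inj: "inj ((*v) A)"
  shows "\<exists>C::real^'n^'n. invertible C \<and> (\<forall>j. N (A *v column j C) \<le> 1) \<and>
           (\<forall>z j. \<bar>z $ j\<bar> \<le> N (A *v (C *v z)))"
proof -
  define K where "K = {C :: real^'n^'n. \<forall>j. N (A *v column j C) \<le> 1}"
  have "closed K"
  proof -
    have "K = (\<Inter>j. (\<lambda>C::real^'n^'n. A *v column j C) -` {v. N v \<le> 1})"
      unfolding K_def by auto
    moreover have "closed ((\<lambda>C::real^'n^'n. A *v column j C) -` {v. N v \<le> 1})" for j
      by (rule closed_vimage[OF cl]) (unfold matrix_vector_mult_def column_def, intro continuous_intros)
    ultimately show ?thesis by auto
  qed
  obtain B where B: "B > 0" "\<And>x. B * norm x \<le> norm (A *v x)"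
    using linear_inj_bounded_below_pos[of "(*v) A"] inj matrix_vector_mul_linear by blast
  have nb: "norm v \<le> real CARD('m)" if "N v \<le> 1" for v :: "real^'m"
  proof -
    have "norm v \<le> (\<Sum>i\<in>UNIV. \<bar>v$i\<bar>)" by (rule norm_le_l1_cart)
    also have "\<dots> \<le> (\<Sum>i\<in>(UNIV::'m set). 1)"
      by (rule sum_mono) (meson comp order_trans that)
    finally show ?thesis by simp
  qed
  have "bounded K"
  proof -
    have "norm C \<le> real CARD('n) * real CARD('n) * (real CARD('m) / B)" if "C \<in> K" for C
    proof -
      have ent: "\<bar>C$i$j\<bar> \<le> real CARD('m) / B" for i j
      proof -
        have "\<bar>C$i$j\<bar> = \<bar>column j C $ i\<bar>" by (simp add: column_def)
        also have "\<dots> \<le> norm (column j C)" by (rule component_le_norm_cart)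
        also have "\<dots> \<le> norm (A *v column j C) / B"
          using B(1) B(2)[of "column j C"] by (simp add: field_simps)
        also have "\<dots> \<le> real CARD('m) / B"
          using nb[of "A *v column j C"] that B(1) unfolding K_def
          by (simp add: divide_right_mono)
        finally show ?thesis .
      qed
      have "norm C \<le> (\<Sum>i\<in>UNIV. norm (C$i))" unfolding norm_vec_def by (rule L2_set_le_sum) simp
      also have "\<dots> \<le> (\<Sum>i\<in>(UNIV::'n set). \<Sum>j\<in>(UNIV::'n set). \<bar>C$i$j\<bar>)"
        by (rule sum_mono) (rule norm_le_l1_cart)
      also have "\<dots> \<le> (\<Sum>i\<in>(UNIV::'n set). \<Sum>j\<in>(UNIV::'n set). real CARD('m) / B)"
        by (intro sum_mono ent)
      finally show ?thesis by simp
    qed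
    then show ?thesis unfolding bounded_iff by blast
  qed
  have "compact K" using \<open>closed K\<close> \<open>bounded K\<close> by (simp add: compact_eq_bounded_closed)
  have "0 \<in> K"
  proof -
    have "N 0 \<le> 1/2 * N 0" using hom[of "1/2" 0] by simp
    moreover have "0 \<le> N 0" using comp[of 0] abs_ge_zero order_trans by blast
    ultimately have "N 0 \<le> 1" by simp
    moreover have "column j (0::real^'n^'n) = 0" for j by (simp add: column_def vec_eq_iff)
    ultimately show ?thesis unfolding K_def by simp
  qed
  then have "K \<noteq> {}" by auto
  have "continuous_on K (\<lambda>C::real^'n^'n. \<bar>det C\<bar>)"
    unfolding det_def by (intro continuous_intros)
  then obtain C where CK: "C \<in> K" and Cmax: "\<And>D. D \<in> K \<Longrightarrow> \<bar>det D\<bar> \<le> \<bar>det C\<bar>"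
    using continuous_attains_sup[OF \<open>compact K\<close> \<open>K \<noteq> {}\<close>] by blast
  define M where "M = 1 + (\<Sum>j\<in>UNIV. \<bar>N (A *v (\<chi> i. if i = j then 1 else 0))\<bar>)"
  have "M \<ge> 1" unfolding M_def by (simp add: sum_nonneg)
  define t where "t = 1 / M"
  have tpos: "t > 0" using \<open>M \<ge> 1\<close> by (simp add: t_def)
  define D :: "real^'n^'n" where "D = (\<chi> i j. if i = j then t else 0)"
  have "D \<in> K"
  proof -
    have "N (A *v column j D) \<le> 1" for j
    proof -
      let ?e = "(\<chi> i. if i = j then 1 else 0) :: real^'n"
      have "column j D = t *\<^sub>R ?e" by (simp add: D_def column_def vec_eq_iff)
      then have "N (A *v column j D) = N (t *\<^sub>R (A *v ?e))" by (simp add: matrix_vector_mult_scaleR)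
      also have "\<dots> \<le> t * N (A *v ?e)" by (rule hom[OF tpos])
      also have "\<dots> \<le> t * M"
      proof -
        have "N (A *v ?e) \<le> \<bar>N (A *v ?e)\<bar>" by simp
        also have "\<dots> \<le> (\<Sum>j\<in>UNIV. \<bar>N (A *v (\<chi> i. if i = j then 1 else 0))\<bar>)"
          by (rule member_le_sum[where f="\<lambda>j. \<bar>N (A *v (\<chi> i. if i = j then 1 else 0))\<bar>"]) auto
        also have "\<dots> \<le> M" unfolding M_def by simp
        finally show ?thesis using tpos by simp
      qed
      also have "\<dots> = 1" using \<open>M \<ge> 1\<close> by (simp add: t_def)
      finally show ?thesis .
    qed
    then show ?thesis unfolding K_def by simp
  qed
  have "det D = t ^ CARD('n)"
    by (subst det_diagonal) (auto simp: D_def)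
  then have "det D \<noteq> 0" using tpos by simp
  then have detC: "det C \<noteq> 0" using Cmax[OF \<open>D \<in> K\<close>] by auto
  have "invertible C" using detC by (simp add: invertible_det_nz)
  moreover have "\<forall>j. N (A *v column j C) \<le> 1" using CK unfolding K_def by simp
  moreover have "\<bar>z $ k\<bar> \<le> N (A *v (C *v z))" for z k
  proof (cases "N (A *v (C *v z)) = 0")
    case True
    then have "A *v (C *v z) = 0"
      using comp[of "A *v (C *v z)"] by (simp add: vec_eq_iff)
    then have "C *v z = 0" using inj by (metis inj_eq matrix_vector_mult_0_right)
    then have "z = 0" using inj_matrix_vector_mult[OF \<open>invertible C\<close>]
      by (metis inj_eq matrix_vector_mult_0_right)
    then show ?thesis using comp[of "A *v (C *v z)"] by simp
  next
    case False
    define s where "s = N (A *v (C *v z))"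
    have "s \<ge> 0" unfolding s_def using comp abs_ge_zero order_trans by blast
    with False have spos: "s > 0" unfolding s_def by simp
    define w where "w = (1/s) *\<^sub>R z"
    define E :: "real^'n^'n" where "E = (\<chi> i j. if j = k then (C *v w)$i else C$i$j)"
    have "E \<in> K"
    proof -
      have "N (A *v column j E) \<le> 1" for j
      proof (cases "j = k")
        case True
        then have "column j E = (1/s) *\<^sub>R (C *v z)"
          by (simp add: E_def column_def w_def vec_eq_iff matrix_vector_mult_scaleR)
        then have "N (A *v column j E) = N ((1/s) *\<^sub>R (A *v (C *v z)))"
          by (simp add: matrix_vector_mult_scaleR)
        also have "\<dots> \<le> (1/s) * s" using hom[of "1/s" "A *v (C *v z)"] spos by (simp add: s_def)
        finally show ?thesis using spos by simp
      next
        case False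
        then have "column j E = column j C" by (simp add: E_def column_def)
        then show ?thesis using CK unfolding K_def by simp
      qed
      then show ?thesis unfolding K_def by simp
    qed
    have "det E = w $ k * det C" unfolding E_def by (rule cramer_lemma)
    then have "\<bar>w $ k\<bar> * \<bar>det C\<bar> \<le> \<bar>det C\<bar>" using Cmax[OF \<open>E \<in> K\<close>] by (simp add: abs_mult)
    then have "\<bar>w $ k\<bar> \<le> 1" using detC by simp
    then have "\<bar>z $ k\<bar> / s \<le> 1" using spos by (simp add: w_def abs_mult)
    then show ?thesis using spos by (simp add: s_def field_simps)
  qed
  ultimately show ?thesis by blast
qed

lemma column_mult: "column j ((A::real^'n^'m) ** C) = A *v column j C"
  by (simp add: vec_eq_iff column_def matrix_matrix_mult_def matrix_vector_mult_def)

theorem mainTheorem2: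
  fixes A :: "real^'n^'m" and p :: ereal
  assumes "rank A = CARD('n)"
    and "1 \<le> p"
  shows "\<exists>R :: real^'n^'n. invertible R \<and>
           cond_number p (A ** matrix_inv R) \<le> real CARD('n)"
proof -
  have inj: "inj ((*v) A)" using assms(1) full_rank_injective by blast
  have hom: "vec_pnorm p (t *\<^sub>R v) \<le> t * vec_pnorm p v" if "t > 0" for t and v :: "real^'m"
  proof -
    have eq: "(\<lambda>i. (t *\<^sub>R v) $ i) = (\<lambda>i. t * v $ i)" by auto
    show ?thesis
      unfolding vec_pnorm_def eq using lp_hom[of UNIV p t "\<lambda>i. v $ i"] assms(2) that by simp
  qed
  have comp: "\<bar>v $ i\<bar> \<le> vec_pnorm p v" for v :: "real^'m" and i
    unfolding vec_pnorm_def using lp_comp[of UNIV i p "\<lambda>i. v $ i"] assms(2) by simp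
  obtain C :: "real^'n^'n" where Cinv: "invertible C"
    and Ccol: "\<forall>j. vec_pnorm p (A *v column j C) \<le> 1"
    and Cz: "\<forall>z j. \<bar>z $ j\<bar> \<le> vec_pnorm p (A *v (C *v z))"
    using auerbach[of "vec_pnorm p" A, OF hom comp lp_closed[OF assms(2)] inj] by blast
  obtain C' where C': "C ** C' = mat 1" "C' ** C = mat 1" using Cinv unfolding invertible_def by blast
  define R where "R = C'"
  have Rinv: "invertible R" unfolding R_def invertible_def using C' by blast
  have "matrix_inv R = C"
  proof -
    have "R ** matrix_inv R = mat 1 \<and> matrix_inv R ** R = mat 1"
      unfolding matrix_inv_def by (rule someI[of _ C]) (use C' R_def in auto)
    then have "C ** (R ** matrix_inv R) = C" by (simp add: matrix_mul_rid)
    then show ?thesis using C'(1) unfolding R_def by (simp add: matrix_mul_assoc matrix_mul_lid)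
  qed
  define U where "U = A ** C"
  have Ucol: "vec_pnorm p (column j U) \<le> 1" for j using Ccol by (simp add: U_def column_mult)
  have Uz: "\<bar>z $ j\<bar> \<le> vec_pnorm p (U *v z)" for z j
    using Cz by (simp add: U_def matrix_vector_mul_assoc)
  define e where "e = (\<lambda>x::ereal. if x = \<infinity> then 1 else real CARD('n) powr (1 / real_of_ereal x))"
  define q where "q = dual_exp p"
  have npos: "real CARD('n) > 0" by simp
  have q1: "1 \<le> q" and eprod: "e p * e q = real CARD('n)"
  proof -
    have "1 \<le> q \<and> e p * e q = real CARD('n)"
      using assms(2)
    proof (cases rule: ereal_ge1_cases)
      case 1
      then show ?thesis by (simp add: q_def dual_exp_def e_def)
    next
      case (2 r)
      show ?thesis
      proof (cases "r = 1")
        case True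
        then show ?thesis using 2 by (simp add: q_def dual_exp_def e_def)
      next
        case False
        then have r1: "r > 1" using 2 by simp
        have qe: "q = ereal (r / (r - 1))" using 2 r1 by (simp add: q_def dual_exp_def)
        have "1 \<le> r / (r - 1)" using r1 by (simp add: field_simps)
        moreover have "e p * e q = real CARD('n) powr (1/r + (r - 1) / r)"
          using 2 qe by (simp add: e_def powr_add)
        moreover have "1/r + (r - 1) / r = 1" using r1 by (simp add: field_simps)
        ultimately show ?thesis using qe by simp
      qed
    qed
    then show "1 \<le> q" "e p * e q = real CARD('n)" by auto
  qed
  have entry: "entry_pnorm p U \<le> e p"
    using assms(2)
  proof (cases rule: ereal_ge1_cases)
    case 1
    have "\<bar>U $ i $ j\<bar> \<le> 1" for i j
      using comp[of "column j U" i] Ucol[of j] by (simp add: column_def)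
    then have "entry_pnorm p U \<le> 1"
      unfolding entry_pnorm_def lp_norm_def using 1 by (auto simp: Max_le_iff)
    then show ?thesis using 1 by (simp add: e_def)
  next
    case (2 r)
    have inner: "(\<Sum>i\<in>UNIV. \<bar>U $ i $ j\<bar> powr r) \<le> 1" for j
      using Ucol[of j] lp_le1[OF 2(1) 2(2), of UNIV "\<lambda>i. U $ i $ j"] by (simp add: vec_pnorm_def column_def)
    have "(\<Sum>x\<in>(UNIV::('m \<times> 'n) set). \<bar>case x of (i, j) \<Rightarrow> U $ i $ j\<bar> powr r)
          = (\<Sum>i\<in>UNIV. \<Sum>j\<in>UNIV. \<bar>U $ i $ j\<bar> powr r)"
      by (simp add: sum.cartesian_product case_prod_unfold)
    also have "\<dots> = (\<Sum>j\<in>UNIV. \<Sum>i\<in>UNIV. \<bar>U $ i $ j\<bar> powr r)" by (rule sum.swap)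
    also have "\<dots> \<le> (\<Sum>j\<in>(UNIV::'n set). 1)" by (intro sum_mono inner)
    finally have S: "(\<Sum>x\<in>(UNIV::('m \<times> 'n) set). \<bar>case x of (i, j) \<Rightarrow> U $ i $ j\<bar> powr r) \<le> real CARD('n)"
      by simp
    have "entry_pnorm p U = (\<Sum>x\<in>(UNIV::('m \<times> 'n) set). \<bar>case x of (i, j) \<Rightarrow> U $ i $ j\<bar> powr r) powr (1/r)"
      using 2 by (simp add: entry_pnorm_def lp_norm_def)
    also have "\<dots> \<le> real CARD('n) powr (1/r)"
      using S 2 by (intro powr_mono2) (auto intro: sum_nonneg)
    finally show ?thesis using 2 by (simp add: e_def)
  qed
  have vec: "vec_pnorm q z \<le> e q * vec_pnorm p (U *v z)" for z :: "real^'n"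
  proof -
    have s0: "0 \<le> vec_pnorm p (U *v z)" using comp[of "U *v z"] abs_ge_zero order_trans by blast
    have b: "lp_norm q UNIV (\<lambda>i. z $ i) \<le> e q * vec_pnorm p (U *v z)"
      unfolding e_def by (rule lp_bound) (use q1 Uz s0 in auto)
    show ?thesis using b by (simp add: vec_pnorm_def)
  qed
  have cond: "conditioned (e p) (e q) p U"
    unfolding conditioned_def q_def[symmetric] using entry vec by blast
  have bdd: "bdd_below {\<alpha> * \<beta> | \<alpha> \<beta>. conditioned \<alpha> \<beta> p U}"
  proof (rule bdd_belowI[of _ 0], clarify)
    fix \<alpha> \<beta> assume c: "conditioned \<alpha> \<beta> p U"
    have a0: "0 \<le> \<alpha>"
    proof -
      obtain x :: "'m \<times> 'n" where True by simp
      have "\<bar>case x of (i, j) \<Rightarrow> U $ i $ j\<bar> \<le> entry_pnorm p U"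
        unfolding entry_pnorm_def by (rule lp_comp) (use assms(2) in auto)
      then show ?thesis using c unfolding conditioned_def by linarith
    qed
    define z1 :: "real^'n" where "z1 = (\<chi> j. 1)"
    obtain j :: 'n where True by simp
    have "1 \<le> vec_pnorm q z1"
      using lp_comp[of UNIV j q "\<lambda>i. z1 $ i"] q1 by (simp add: vec_pnorm_def z1_def)
    also have "\<dots> \<le> \<beta> * vec_pnorm p (U *v z1)" using c unfolding conditioned_def q_def by blast
    finally have "1 \<le> \<beta> * vec_pnorm p (U *v z1)" .
    moreover have "0 \<le> vec_pnorm p (U *v z1)" using comp[of "U *v z1"] abs_ge_zero order_trans by blast
    ultimately have "\<beta> > 0" by (metis mult_nonpos_nonneg not_le not_one_le_zero order_trans)
    then show "0 \<le> \<alpha> * \<beta>" using a0 by simp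
  qed
  have "cond_number p U \<le> e p * e q"
    unfolding cond_number_def by (rule cInf_lower[OF _ bdd]) (use cond in blast)
  then have "cond_number p (A ** matrix_inv R) \<le> real CARD('n)"
    using eprod \<open>matrix_inv R = C\<close> U_def by simp
  then show ?thesis using Rinv by blast
qed

end
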